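(* There are absolute constants $K>0$ and $d_0$ such that for all $d\ge d_0$, a standard Gaussian vector $\mathbf{w}\sim\mathcal{N}(0,I_d)$ satisfies $\|\mathbf{w}\|_T\le K\sqrt{d}$ with probability at least $1-\exp(-2d/(\log d)^4)$. The same holds if $\mathbf{w}$ is instead distributed as $\mathcal{N}(0,I_d)$ conditioned on $w_1+\dots+w_d=0$ (i.e. $\mathbf{w}\sim\mathcal{N}(0,I_d-\mathbf{1}\mathbf{1}^T/d)$).
   Context: For $\mathbf{v}\in\mathbb{R}^d$ define \[\|\mathbf{v}\|_T^2=\sup_{\emptyset\ne S\subseteq[d]}\log^4(2d/|S|)\sum_{j\in S}v_j^2.\] *)

theory Defs
  imports "HOL-Probability.Probability"
begin

text \<open>Vectors in R^d are represented as functions nat => real, with coordinates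
  indexed by {..<d} (i.e. [d] shifted by one).\<close>

definition Tnorm_sq :: "nat \<Rightarrow> (nat \<Rightarrow> real) \<Rightarrow> real" where
  "Tnorm_sq d v = (SUP S \<in> {S. S \<subseteq> {..<d} \<and> S \<noteq> {}}.
      (ln (2 * real d / real (card S))) ^ 4 * (\<Sum>j\<in>S. (v j)\<^sup>2))"

definition Tnorm :: "nat \<Rightarrow> (nat \<Rightarrow> real) \<Rightarrow> real" where
  "Tnorm d v = sqrt (Tnorm_sq d v)"

definition std_gaussian :: "nat \<Rightarrow> (nat \<Rightarrow> real) measure" where
  "std_gaussian d = PiM {..<d} (\<lambda>_. density lborel std_normal_density)"

definition center :: "nat \<Rightarrow> (nat \<Rightarrow> real) \<Rightarrow> (nat \<Rightarrow> real)" where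
  "center d w = (\<lambda>i. if i < d then w i - (\<Sum>j<d. w j) / real d else undefined)"

text \<open>N(0, I_d - 1 1^T / d) = law of the centered standard Gaussian vector,
  i.e. N(0,I_d) conditioned on w_1 + ... + w_d = 0.\<close>
definition centered_gaussian :: "nat \<Rightarrow> (nat \<Rightarrow> real) measure" where
  "centered_gaussian d = distr (std_gaussian d) (PiM {..<d} (\<lambda>_. lborel)) (center d)"

end

theory Submission imports Defs begin


lemma pow_fact_le_exp:
  fixes x :: real assumes "0 \<le> x" shows "x ^ n / fact n \<le> exp x"
proof -
  have "x ^ n / fact n \<le> (\<Sum>m\<le>n. x ^ m / fact m)"
    by (rule member_le_sum) (use assms in auto)
  also have "\<dots> \<le> exp x"
    using assms summable_exp_generic[of x]
    by (auto simp: exp_def divide_inverse ac_simps intro!: sum_le_suminf)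
  finally show ?thesis .
qed

lemma choose_le_exp:
  assumes "1 \<le> k" "k \<le> d"
  shows "real (d choose k) \<le> exp (real k * (1 + ln (real d / real k)))"
proof -
  have kp: "real k > 0" using assms by auto
  have "fact k * real (d choose k) = fact d / fact (d - k)"
    using binomial_fact[of k d, where 'a=real] assms by (simp add: field_simps)
  also have "\<dots> \<le> real d ^ k"
  proof -
    have "fact d / fact (d-k) = real (fact d div fact (d-k))"
      by (simp add: fact_dvd real_of_nat_div assms(2) of_nat_fact)
    also have "\<dots> \<le> real (d ^ k)" using fact_div_fact_le_pow[OF assms(2)] by linarith
    finally show ?thesis by simp
  qed
  finally have c: "real (d choose k) \<le> real d ^ k / fact k"
    by (simp add: field_simps)
  have "real k ^ k / fact k \<le> exp (real k)" by (rule pow_fact_le_exp) simp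
  hence "1 / fact k \<le> exp (real k) / real k ^ k" using kp by (simp add: field_simps)
  hence "real d ^ k / fact k \<le> real d ^ k * (exp (real k) / real k ^ k)"
    by (metis divide_inverse inverse_eq_divide mult_left_mono zero_le_power of_nat_0_le_iff)
  also have "\<dots> = exp (real k * (1 + ln (real d / real k)))"
  proof -
    have "real d / real k > 0" using assms by auto
    have "exp (real k * (1 + ln (real d / real k))) = exp (real k) * exp (ln (real d / real k)) ^ k"
      by (simp add: distrib_left exp_add exp_of_nat_mult[symmetric] mult.commute)
    also have "\<dots> = exp (real k) * (real d / real k) ^ k" using \<open>real d / real k > 0\<close> by simp
    finally show ?thesis by (simp add: power_divide)
  qed
  finally show ?thesis using c by linarith
qed

lemma analytic:
  assumes d2: "2 \<le> d" and k1: "1 \<le> k" and kd: "k \<le> d"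
  shows "real (d choose k) * sqrt 2 ^ k * exp (- 400 * real d / (ln (2 * real d / real k)) ^ 4)
     \<le> exp (- 3 * real d / (ln (real d)) ^ 4)"
proof -
  define L where "L = ln (2 * real d / real k)"
  have kp: "real k > 0" using k1 by simp
  have dp: "real d \<ge> 2" using d2 by simp
  have q: "2 * real d / real k \<ge> 2" using kd kp by (simp add: field_simps)
  have Lge: "L \<ge> ln 2" unfolding L_def using q by (simp add: ln_le_cancel_iff)
  have Lp: "L > 0" using Lge ln_gt_zero[of 2] by linarith
  have eL: "exp L = 2 * real d / real k" unfolding L_def using q by simp
  have kL: "real k = 2 * real d / exp L" using eL kp by (simp add: field_simps)
  have l5: "L ^ 5 \<le> 120 * exp L" using pow_fact_le_exp[of L 5] Lp by (simp add: fact_numeral)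
  have l4: "L ^ 4 \<le> 24 * exp L" using pow_fact_le_exp[of L 4] Lp by (simp add: fact_numeral)
  have A: "real k * (1 + L) * L ^ 4 \<le> 288 * real d"
  proof -
    have "real k * (1 + L) * L ^ 4 = 2 * real d * (L^5 + L^4) / exp L"
      by (simp add: kL field_simps power_Suc eval_nat_numeral)
    also have "\<dots> \<le> 2 * real d * (144 * exp L) / exp L"
      using l4 l5 dp by (intro divide_right_mono mult_left_mono) auto
    also have "\<dots> = 288 * real d" by simp
    finally show ?thesis .
  qed
  have lnd: "ln (real d) > 0" using dp by simp
  have L2: "L \<le> 2 * ln (real d)"
  proof -
    have "L \<le> ln (2 * real d)" unfolding L_def using kp k1 dp
      by (subst ln_le_cancel_iff) (auto simp: field_simps)
    also have "\<dots> = ln 2 + ln (real d)" using dp by (simp add: ln_mult)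
    also have "\<dots> \<le> 2 * ln (real d)" using dp by (simp add: ln_le_cancel_iff)
    finally show ?thesis .
  qed
  have L4: "L ^ 4 \<le> 16 * ln (real d) ^ 4"
    using power_mono[OF L2, of 4] Lp by simp
  have B: "7 * real d / ln (real d) ^ 4 \<le> 112 * real d / L ^ 4"
    using L4 Lp lnd dp by (simp add: field_simps)
  have A': "real k * (1 + L) \<le> 288 * real d / L ^ 4"
    using A Lp by (simp add: field_simps)
  have lndk: "ln (real d / real k) = L - ln 2"
    unfolding L_def using kp dp by (simp add: ln_div ln_mult)
  have ln2: "ln (2::real) \<le> 1" using ln_le_minus_one[of 2] by simp
  have ln2p: "ln (2::real) > 0" by simp
  have s2: "sqrt 2 ^ k = exp (real k * ln 2 / 2)"
  proof -
    have "sqrt (2::real) = exp (ln 2 / 2)"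
      by (simp add: powr_half_sqrt[symmetric] powr_def)
    hence "sqrt 2 ^ k = exp (ln 2 / 2) ^ k" by simp
    also have "\<dots> = exp (real k * ln 2 / 2)" by (simp add: exp_of_nat_mult[symmetric])
    finally show ?thesis .
  qed
  have "real (d choose k) * sqrt 2 ^ k * exp (- 400 * real d / L ^ 4)
      \<le> exp (real k * (1 + ln (real d / real k))) * exp (real k * ln 2 / 2) * exp (- 400 * real d / L ^ 4)"
    using choose_le_exp[OF k1 kd] s2 by (intro mult_right_mono) auto
  also have "\<dots> = exp (real k * (1 + ln (real d / real k)) + real k * ln 2 / 2 - 400 * real d / L ^ 4)"
    unfolding exp_add[symmetric] by (rule arg_cong[where f=exp]) (simp add: algebra_simps)
  also have "\<dots> \<le> exp (- 3 * real d / (ln (real d)) ^ 4)"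
  proof (subst exp_le_cancel_iff)
    have "real k * (1 + ln (real d / real k)) + real k * ln 2 / 2 \<le> real k * (1 + L)"
    proof -
      have "real k * (1 + ln (real d / real k)) + real k * ln 2 / 2 = real k * (1 + L) - real k * ln 2 / 2"
        using lndk by (simp add: algebra_simps flip: distrib_left)
      moreover have "real k * ln 2 / 2 \<ge> 0" using kp ln2p by simp
      ultimately show ?thesis by linarith
    qed
    moreover have "- 3 * real d / (ln (real d)) ^ 4 \<ge> 288 * real d / L ^ 4 - 400 * real d / L ^ 4"
    proof -
      have "288 * real d / L ^ 4 - 400 * real d / L ^ 4 = - (112 * real d / L ^ 4)" by (simp add: field_simps)
      also have "\<dots> \<le> - (7 * real d / ln (real d) ^ 4)" using B by linarith
      also have "\<dots> \<le> - 3 * real d / (ln (real d)) ^ 4" using lnd dp by (simp add: field_simps)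
      finally show ?thesis .
    qed
    ultimately show "real k * (1 + ln (real d / real k)) + real k * ln 2 / 2 - 400 * real d / L ^ 4
        \<le> - 3 * real d / (ln (real d)) ^ 4" using A' by linarith
  qed
  finally show ?thesis unfolding L_def .
qed


abbreviation "G \<equiv> density lborel std_normal_density"

lemma G_prob: "prob_space G" by (rule prob_space_normal_density) simp

lemma psf: "product_sigma_finite (\<lambda>_::nat. G)"
  unfolding product_sigma_finite_def using G_prob prob_space_imp_sigma_finite by blast

lemma std_prob: "prob_space (std_gaussian d)"
  unfolding std_gaussian_def by (rule prob_space_PiM) (simp add: G_prob)

lemma nn_G_exp: "(\<integral>\<^sup>+ x. ennreal (exp (x\<^sup>2 / 4)) \<partial>G) = ennreal (sqrt 2)"
proof -
  have "(\<integral>\<^sup>+ x. ennreal (exp (x\<^sup>2 / 4)) \<partial>G) = (\<integral>\<^sup>+ x. ennreal (std_normal_density x) * ennreal (exp (x\<^sup>2 / 4)) \<partial>lborel)"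
    by (subst nn_integral_density) auto
  also have "\<dots> = (\<integral>\<^sup>+ x. ennreal (sqrt 2 * normal_density 0 (sqrt 2) x) \<partial>lborel)"
  proof (intro nn_integral_cong)
    fix x :: real
    have "std_normal_density x * exp (x\<^sup>2 / 4) = sqrt 2 * normal_density 0 (sqrt 2) x"
    proof -
      have e: "exp (- x\<^sup>2 / 2) * exp (x\<^sup>2 / 4) = exp (- x\<^sup>2 / 4)"
        by (simp add: exp_add[symmetric])
      have "sqrt (2 * pi * (sqrt 2)\<^sup>2) = sqrt 2 * sqrt (2 * pi)"
        by (simp add: real_sqrt_mult[symmetric])
      thus ?thesis unfolding std_normal_density_def normal_density_def
        using e by (simp add: field_simps)
    qed
    thus "ennreal (std_normal_density x) * ennreal (exp (x\<^sup>2 / 4)) = ennreal (sqrt 2 * normal_density 0 (sqrt 2) x)"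
      by (simp add: ennreal_mult[symmetric])
  qed
  also have "\<dots> = ennreal (sqrt 2) * (\<integral>\<^sup>+ x. ennreal (normal_density 0 (sqrt 2) x) \<partial>lborel)"
    by (simp add: ennreal_mult nn_integral_cmult)
  also have "(\<integral>\<^sup>+ x. ennreal (normal_density 0 (sqrt 2) x) \<partial>lborel) = 1"
    by (subst nn_integral_eq_integral) auto
  finally show ?thesis by simp
qed

lemma mgf:
  assumes S: "S \<subseteq> {..<d}"
  shows "(\<integral>\<^sup>+ w. ennreal (exp ((\<Sum>j\<in>S. (w j)\<^sup>2) / 4)) \<partial>std_gaussian d) = ennreal (sqrt 2 ^ card S)"
proof -
  interpret product_sigma_finite "\<lambda>_::nat. G" by (rule psf)
  define f where "f = (\<lambda>j x. ennreal (if j \<in> S then exp (x\<^sup>2 / 4) else 1))"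
  have fin: "finite S" using S finite_subset by blast
  have "(\<lambda>w. ennreal (exp ((\<Sum>j\<in>S. (w j)\<^sup>2) / 4))) = (\<lambda>w. \<Prod>j\<in>{..<d}. f j (w j))"
  proof
    fix w :: "nat \<Rightarrow> real"
    have "exp ((\<Sum>j\<in>S. (w j)\<^sup>2) / 4) = (\<Prod>j\<in>S. exp ((w j)\<^sup>2 / 4))"
      using fin by (simp add: sum_divide_distrib exp_sum)
    also have "\<dots> = (\<Prod>j\<in>{..<d}. (if j \<in> S then exp ((w j)\<^sup>2 / 4) else 1))"
      using S by (simp add: prod.If_cases Int_absorb1)
    finally show "ennreal (exp ((\<Sum>j\<in>S. (w j)\<^sup>2) / 4)) = (\<Prod>j\<in>{..<d}. f j (w j))"
      unfolding f_def by (simp add: prod_ennreal)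
  qed
  hence "(\<integral>\<^sup>+ w. ennreal (exp ((\<Sum>j\<in>S. (w j)\<^sup>2) / 4)) \<partial>std_gaussian d)
     = (\<Prod>j\<in>{..<d}. integral\<^sup>N G (f j))"
    unfolding std_gaussian_def
    by (simp only:) (rule product_nn_integral_prod, auto simp: f_def)
  also have "\<dots> = (\<Prod>j\<in>{..<d}. (if j \<in> S then ennreal (sqrt 2) else 1))"
  proof (intro prod.cong refl)
    fix j
    interpret prob_space G by (rule G_prob)
    show "integral\<^sup>N G (f j) = (if j \<in> S then ennreal (sqrt 2) else 1)"
      by (cases "j \<in> S") (use emeasure_space_1 in \<open>auto simp: f_def nn_G_exp\<close>)
  qed
  also have "\<dots> = ennreal (sqrt 2) ^ card S"
    using S by (simp add: prod.If_cases Int_absorb1)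
  finally show ?thesis by (simp add: ennreal_power)
qed

lemma comp_meas: "j \<in> I \<Longrightarrow> (\<lambda>w. w j) \<in> borel_measurable (PiM I (\<lambda>_. G))"
  by (metis measurable_component_singleton measurable_cong_sets sets_density sets_lborel)

lemma sumsq_meas:
  assumes "S \<subseteq> {..<d}"
  shows "(\<lambda>w. \<Sum>j\<in>S. (w j)\<^sup>2) \<in> borel_measurable (std_gaussian d)"
  unfolding std_gaussian_def using assms by (intro borel_measurable_sum borel_measurable_power comp_meas) auto

lemma tail:
  assumes S: "S \<subseteq> {..<d}"
  shows "measure (std_gaussian d) {w\<in>space (std_gaussian d). t \<le> (\<Sum>j\<in>S. (w j)\<^sup>2)}
     \<le> sqrt 2 ^ card S * exp (- t / 4)"
proof -
  let ?M = "std_gaussian d"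
  let ?A = "{w\<in>space ?M. t \<le> (\<Sum>j\<in>S. (w j)\<^sup>2)}"
  interpret prob_space ?M by (rule std_prob)
  have Am: "?A \<in> sets ?M" using sumsq_meas[OF S] by (intro borel_measurable_le) auto
  have "ennreal (exp (t/4)) * emeasure ?M ?A = (\<integral>\<^sup>+ w. ennreal (exp (t/4)) * indicator ?A w \<partial>?M)"
    using Am by (simp add: nn_integral_cmult_indicator)
  also have "\<dots> \<le> (\<integral>\<^sup>+ w. ennreal (exp ((\<Sum>j\<in>S. (w j)\<^sup>2) / 4)) \<partial>?M)"
    by (intro nn_integral_mono) (auto split: split_indicator)
  also have "\<dots> = ennreal (sqrt 2 ^ card S)" by (rule mgf[OF S])
  finally have "ennreal (exp (t/4) * measure ?M ?A) \<le> ennreal (sqrt 2 ^ card S)"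
    by (simp add: emeasure_eq_measure ennreal_mult)
  hence "exp (t/4) * measure ?M ?A \<le> sqrt 2 ^ card S"
    by (subst (asm) ennreal_le_iff) auto
  hence "measure ?M ?A \<le> sqrt 2 ^ card S / exp (t/4)"
    by (simp add: field_simps)
  thus ?thesis by (simp add: exp_minus field_simps)
qed


lemma ln5_le:
  fixes x :: real assumes "x \<ge> 10^10" shows "ln x ^ 5 \<le> x"
proof -
  have xp: "x > 0" using assms by simp
  have "ln x = 10 * ln (x powr (1/10))" using xp by (simp add: ln_powr)
  also have "\<dots> \<le> 10 * (x powr (1/10))"
    using ln_less_self[of "x powr (1/10)"] xp by simp
  finally have l: "ln x \<le> 10 * x powr (1/10)" .
  have l0: "ln x \<ge> 0" using assms by simp
  have "ln x ^ 5 \<le> (10 * x powr (1/10)) ^ 5" using power_mono[OF l l0] .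
  also have "\<dots> = 10^5 * (x powr (1/10)) ^ 5" by (simp add: power_mult_distrib)
  also have "(x powr (1/10)) ^ 5 = x powr (1/2)"
    using xp by (simp add: powr_realpow[symmetric] powr_powr)
  also have "x powr (1/2) = sqrt x" using xp by (simp add: powr_half_sqrt)
  also have "10^5 * sqrt x \<le> sqrt x * sqrt x"
  proof -
    have "sqrt x \<ge> sqrt (10^10)" using assms by (subst real_sqrt_le_iff) simp
    moreover have "sqrt ((10::real)^10) = 10^5"
    proof -
      have "(10::real)^10 = (10^5)^2" by simp
      thus ?thesis by (simp only: real_sqrt_abs) simp
    qed
    ultimately have "sqrt x \<ge> 10^5" by linarith
    thus ?thesis using xp by (intro mult_right_mono) auto
  qed
  also have "sqrt x * sqrt x = x" using xp by simp
  finally show ?thesis .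
qed

definition SS :: "nat \<Rightarrow> nat set set" where "SS d = {S. S \<subseteq> {..<d} \<and> S \<noteq> {}}"
definition tm :: "nat \<Rightarrow> (nat \<Rightarrow> real) \<Rightarrow> nat set \<Rightarrow> real" where
  "tm d v S = (ln (2 * real d / real (card S))) ^ 4 * (\<Sum>j\<in>S. (v j)\<^sup>2)"

lemma SS_fin: "finite (SS d)"
  unfolding SS_def by (rule finite_subset[of _ "Pow {..<d}"]) auto

lemma SS_ne: "d \<ge> 1 \<Longrightarrow> SS d \<noteq> {}"
proof -
  assume "d \<ge> 1" hence "{0} \<in> SS d" unfolding SS_def by auto
  thus ?thesis by blast
qed

lemma Tsq_le: assumes "d \<ge> 1" shows "Tnorm_sq d v \<le> c \<longleftrightarrow> (\<forall>S\<in>SS d. tm d v S \<le> c)"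
proof -
  have "Tnorm_sq d v = (SUP S\<in>SS d. tm d v S)"
    unfolding Tnorm_sq_def SS_def tm_def by simp
  thus ?thesis using SS_ne[OF assms] SS_fin
    by (simp add: cSUP_le_iff bdd_above_finite)
qed

lemma T_le: assumes "d \<ge> 1" "c \<ge> 0"
  shows "Tnorm d v \<le> c \<longleftrightarrow> (\<forall>S\<in>SS d. tm d v S \<le> c\<^sup>2)"
proof -
  have "sqrt x \<le> c \<longleftrightarrow> x \<le> c\<^sup>2" for x
  proof
    assume "sqrt x \<le> c"
    show "x \<le> c\<^sup>2"
    proof (cases "x \<ge> 0")
      case True
      hence "x = (sqrt x)\<^sup>2" by simp
      also have "\<dots> \<le> c\<^sup>2" using \<open>sqrt x \<le> c\<close> True by (intro power_mono) auto
      finally show ?thesis .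
    next
      case False thus ?thesis by (smt (verit) zero_le_power2)
    qed
  next
    assume "x \<le> c\<^sup>2"
    hence "sqrt x \<le> sqrt (c\<^sup>2)" by (subst real_sqrt_le_iff)
    thus "sqrt x \<le> c" using assms(2) by simp
  qed
  thus ?thesis unfolding Tnorm_def using Tsq_le[OF assms(1)] by simp
qed

lemma tm_meas: "S \<subseteq> {..<d} \<Longrightarrow> (\<lambda>w. tm d w S) \<in> borel_measurable (std_gaussian d)"
  unfolding tm_def using sumsq_meas by (intro borel_measurable_times) auto

lemma good_meas: "{w \<in> space (std_gaussian d). \<forall>S\<in>SS d. tm d w S \<le> c} \<in> sets (std_gaussian d)"
  by (rule sets.sets_Collect_finite_All[OF _ SS_fin]) (auto simp: SS_def intro!: borel_measurable_le tm_meas)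

lemma good_prob:
  assumes d2: "d \<ge> 2" and d5: "ln (real d) ^ 5 \<le> real d"
  shows "measure (std_gaussian d) (space (std_gaussian d) -
     {w \<in> space (std_gaussian d). \<forall>S\<in>SS d. tm d w S \<le> 1600 * real d})
     \<le> exp (- 2 * real d / (ln (real d)) ^ 4)"
proof -
  let ?M = "std_gaussian d"
  interpret prob_space ?M by (rule std_prob)
  define L where "L S = ln (2 * real d / real (card S))" for S :: "nat set"
  define B where "B S = {w\<in>space ?M. 1600 * real d / L S ^ 4 \<le> (\<Sum>j\<in>S. (w j)\<^sup>2)}" for S
  define E where "E = exp (- 3 * real d / (ln (real d)) ^ 4)"
  have cardS: "1 \<le> card S \<and> card S \<le> d" if "S \<in> SS d" for S
  proof -
    have "finite S" using that unfolding SS_def using finite_subset by blast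
    hence "card S \<ge> 1" using that unfolding SS_def by (simp add: Suc_le_eq card_gt_0_iff)
    moreover have "card S \<le> card {..<d}" using that unfolding SS_def by (intro card_mono) auto
    ultimately show ?thesis by simp
  qed
  have Lp: "L S > 0" if "S \<in> SS d" for S
  proof -
    have "real (card S) > 0" "real (card S) \<le> real d" using cardS[OF that] by auto
    hence "2 * real d / real (card S) > 1" by (simp add: field_simps)
    thus ?thesis unfolding L_def by simp
  qed
  have sub: "space ?M - {w \<in> space ?M. \<forall>S\<in>SS d. tm d w S \<le> 1600 * real d} \<subseteq> (\<Union>S\<in>SS d. B S)"
  proof
    fix w assume "w \<in> space ?M - {w \<in> space ?M. \<forall>S\<in>SS d. tm d w S \<le> 1600 * real d}"
    then obtain S where S: "S \<in> SS d" "tm d w S > 1600 * real d" and w: "w \<in> space ?M" by auto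
    have "L S ^ 4 * (\<Sum>j\<in>S. (w j)\<^sup>2) > 1600 * real d" using S(2) unfolding tm_def L_def by simp
    hence "1600 * real d / L S ^ 4 \<le> (\<Sum>j\<in>S. (w j)\<^sup>2)" using Lp[OF S(1)]
      by (simp add: field_simps)
    thus "w \<in> (\<Union>S\<in>SS d. B S)" using S w unfolding B_def by auto
  qed
  have Bm: "B ` SS d \<subseteq> sets ?M"
    unfolding B_def SS_def by (auto intro!: borel_measurable_le sumsq_meas)
  have "measure ?M (space ?M - {w \<in> space ?M. \<forall>S\<in>SS d. tm d w S \<le> 1600 * real d})
      \<le> measure ?M (\<Union>S\<in>SS d. B S)"
    using sub Bm SS_fin by (intro finite_measure_mono) auto
  also have "\<dots> \<le> (\<Sum>S\<in>SS d. measure ?M (B S))"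
    using Bm SS_fin by (intro finite_measure_subadditive_finite) auto
  also have "\<dots> \<le> (\<Sum>S\<in>SS d. E / real (d choose card S))"
  proof (intro sum_mono)
    fix S assume S: "S \<in> SS d"
    have "measure ?M (B S) \<le> sqrt 2 ^ card S * exp (- (1600 * real d / L S ^ 4) / 4)"
      unfolding B_def by (rule tail) (use S in \<open>auto simp: SS_def\<close>)
    also have "\<dots> = sqrt 2 ^ card S * exp (- 400 * real d / L S ^ 4)" by simp
    also have "\<dots> \<le> E / real (d choose card S)"
    proof -
      have cp: "real (d choose card S) > 0" using cardS[OF S] by simp
      have "real (d choose card S) * (sqrt 2 ^ card S * exp (- 400 * real d / L S ^ 4)) \<le> E"
        using analytic[OF d2, of "card S"] cardS[OF S] unfolding E_def L_def by (simp add: mult.assoc)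
      thus ?thesis using cp by (simp add: field_simps)
    qed
    finally show "measure ?M (B S) \<le> E / real (d choose card S)" .
  qed
  also have "\<dots> = (\<Sum>k\<in>{1..d}. (\<Sum>S\<in>{S. S \<in> SS d \<and> card S = k}. E / real (d choose card S)))"
    by (rule sum.group[symmetric]) (use SS_fin cardS in auto)
  also have "\<dots> = (\<Sum>k\<in>{1..d}. E)"
  proof (intro sum.cong refl)
    fix k assume k: "k \<in> {1..d}"
    have eq: "{S. S \<in> SS d \<and> card S = k} = {S. S \<subseteq> {..<d} \<and> card S = k}"
      using k unfolding SS_def by auto
    have "(\<Sum>S\<in>{S. S \<in> SS d \<and> card S = k}. E / real (d choose card S))
       = (\<Sum>S\<in>{S. S \<subseteq> {..<d} \<and> card S = k}. E / real (d choose k))"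
      unfolding eq by (intro sum.cong) auto
    also have "\<dots> = real (d choose k) * (E / real (d choose k))"
      using n_subsets[of "{..<d}" k] by simp
    also have "\<dots> = E" using k by simp
    finally show "(\<Sum>S\<in>{S. S \<in> SS d \<and> card S = k}. E / real (d choose card S)) = E" .
  qed
  also have "\<dots> = real d * E" by simp
  also have "\<dots> \<le> exp (- 2 * real d / (ln (real d)) ^ 4)"
  proof -
    have lnd: "ln (real d) > 0" using d2 by simp
    have "ln (real d) \<le> real d / ln (real d) ^ 4" using d5 lnd by (simp add: field_simps eval_nat_numeral)
    hence "real d \<le> exp (real d / ln (real d) ^ 4)"
      using d2 by (metis exp_le_cancel_iff exp_ln_iff less_le_trans of_nat_0_less_iff zero_less_numeral less_le_trans order.strict_trans2 pos2 exp_ln not_less)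
    hence "real d * E \<le> exp (real d / ln (real d) ^ 4) * E" unfolding E_def by (intro mult_right_mono) auto
    also have "\<dots> = exp (- 2 * real d / (ln (real d)) ^ 4)"
      unfolding E_def by (simp add: exp_add[symmetric] field_simps)
    finally show ?thesis .
  qed
  finally show ?thesis .
qed

lemma ln2_half: "ln (2::real) \<ge> 1/2"
proof -
  have "exp (1/2::real) ^ 2 = exp 1" by (simp add: exp_of_nat_mult[symmetric])
  also have "\<dots> \<le> 3" by (rule exp_le)
  finally have "exp (1/2::real) ^ 2 \<le> 2 ^ 2" by simp
  hence "exp (1/2::real) \<le> 2" by (rule power2_le_imp_le) simp
  thus ?thesis by (subst ln_ge_iff) auto
qed

lemma center_tm:
  assumes d1: "d \<ge> 1" and good: "\<forall>S\<in>SS d. tm d w S \<le> 1600 * real d" and S: "S \<in> SS d"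
  shows "tm d (center d w) S \<le> 1600\<^sup>2 * real d"
proof -
  define m where "m = (\<Sum>j<d. w j) / real d"
  define A where "A = (\<Sum>j<d. (w j)\<^sup>2)"
  define k where "k = card S"
  define L where "L = ln (2 * real d / real k)"
  have Ssub: "S \<subseteq> {..<d}" and Sne: "S \<noteq> {}" using S unfolding SS_def by auto
  have fS: "finite S" using Ssub finite_subset by blast
  have kp: "real k > 0" unfolding k_def using fS Sne by (simp add: card_gt_0_iff)
  have kd: "k \<le> d" unfolding k_def using card_mono[OF _ Ssub] by simp
  have dp: "real d > 0" using d1 by simp
  have q: "2 * real d / real k \<ge> 2" using kd kp by (simp add: field_simps)
  have Lp: "L > 0" unfolding L_def using q by simp
  have eL: "exp L = 2 * real d / real k" unfolding L_def using q by simp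
  have l4: "L ^ 4 \<le> 24 * exp L" using pow_fact_le_exp[of L 4] Lp by (simp add: fact_numeral)
  have Lk: "L ^ 4 * real k \<le> 48 * real d"
  proof -
    have "L ^ 4 * real k \<le> 24 * exp L * real k" using l4 kp by (intro mult_right_mono) auto
    also have "\<dots> = 48 * real d" using eL kp by (simp add: field_simps)
    finally show ?thesis .
  qed
  have ce: "center d w j = w j - m" if "j \<in> S" for j
    using that Ssub unfolding center_def m_def by auto
  have b: "(\<Sum>j\<in>S. (center d w j)\<^sup>2) \<le> 2 * (\<Sum>j\<in>S. (w j)\<^sup>2) + 2 * real k * m\<^sup>2"
  proof -
    have "(\<Sum>j\<in>S. (center d w j)\<^sup>2) = (\<Sum>j\<in>S. (w j - m)\<^sup>2)" using ce by simp
    also have "\<dots> \<le> (\<Sum>j\<in>S. 2 * (w j)\<^sup>2 + 2 * m\<^sup>2)"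
    proof (intro sum_mono)
      fix j show "(w j - m)\<^sup>2 \<le> 2 * (w j)\<^sup>2 + 2 * m\<^sup>2"
        using zero_le_power2[of "w j + m"] by (simp add: power2_eq_square algebra_simps)
    qed
    also have "\<dots> = 2 * (\<Sum>j\<in>S. (w j)\<^sup>2) + 2 * real k * m\<^sup>2"
      unfolding k_def by (simp add: sum.distrib sum_distrib_left)
    finally show ?thesis .
  qed
  have c: "real d * m\<^sup>2 \<le> A"
  proof -
    have "0 \<le> (\<Sum>j<d. (w j - m)\<^sup>2)" by (intro sum_nonneg) auto
    also have "\<dots> = (\<Sum>j<d. (w j)\<^sup>2 - 2 * m * w j + m\<^sup>2)"
      by (simp add: power2_eq_square algebra_simps)
    also have "\<dots> = A - 2 * m * (\<Sum>j<d. w j) + real d * m\<^sup>2"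
      unfolding A_def by (simp add: sum.distrib sum_subtractf sum_distrib_left)
    also have "(\<Sum>j<d. w j) = real d * m" unfolding m_def using dp by simp
    finally show ?thesis by (simp add: power2_eq_square algebra_simps)
  qed
  have "0 \<in> {..<d}" using d1 by simp
  hence dall: "{..<d} \<in> SS d" unfolding SS_def by auto
  have "tm d w {..<d} \<le> 1600 * real d" using good dall by blast
  hence l2A: "ln 2 ^ 4 * A \<le> 1600 * real d" unfolding tm_def A_def using dp by simp
  have p0: "(1/2) ^ 4 \<le> ln (2::real) ^ 4" using ln2_half by (intro power_mono) auto
  have p: "1/16 \<le> ln (2::real) ^ 4" using p0 by (simp add: eval_nat_numeral)
  have "A \<ge> 0" unfolding A_def by (intro sum_nonneg) auto
  hence "1/16 * A \<le> ln (2::real) ^ 4 * A" using p by (intro mult_right_mono)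
  hence Ab: "A \<le> 25600 * real d" using l2A by linarith
  have t1: "L ^ 4 * (\<Sum>j\<in>S. (w j)\<^sup>2) \<le> 1600 * real d"
    using good S unfolding tm_def L_def k_def by blast
  have t2: "L ^ 4 * (real k * m\<^sup>2) \<le> 48 * A"
  proof -
    have "L ^ 4 * (real k * m\<^sup>2) = (L ^ 4 * real k) * (real d * m\<^sup>2) / real d"
      using dp by simp
    also have "\<dots> \<le> (48 * real d) * A / real d"
    proof (rule divide_right_mono)
      show "L ^ 4 * real k * (real d * m\<^sup>2) \<le> 48 * real d * A"
        by (rule mult_mono[OF Lk c]) (use dp in auto)
    qed (use dp in auto)
    also have "\<dots> = 48 * A" using dp by simp
    finally show ?thesis .
  qed
  have "tm d (center d w) S = L ^ 4 * (\<Sum>j\<in>S. (center d w j)\<^sup>2)"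
    unfolding tm_def L_def k_def ..
  also have "\<dots> \<le> L ^ 4 * (2 * (\<Sum>j\<in>S. (w j)\<^sup>2) + 2 * real k * m\<^sup>2)"
    using b Lp by (intro mult_left_mono) auto
  also have "\<dots> = 2 * (L ^ 4 * (\<Sum>j\<in>S. (w j)\<^sup>2)) + 2 * (L ^ 4 * (real k * m\<^sup>2))"
    by (simp add: algebra_simps)
  also have "\<dots> \<le> 2 * (1600 * real d) + 2 * (48 * (25600 * real d))"
    using t1 t2 Ab by linarith
  also have "\<dots> \<le> 1600\<^sup>2 * real d" using dp by simp
  finally show ?thesis .
qed

abbreviation "NN d \<equiv> PiM {..<d} (\<lambda>_::nat. (lborel::real measure))"

lemma comp_measN: "j \<in> I \<Longrightarrow> (\<lambda>w. w j) \<in> borel_measurable (PiM I (\<lambda>_. lborel))"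
  by (metis measurable_component_singleton measurable_cong_sets sets_lborel)

lemma tm_measN: "S \<subseteq> {..<d} \<Longrightarrow> (\<lambda>w. tm d w S) \<in> borel_measurable (NN d)"
  unfolding tm_def using comp_measN
  by (intro borel_measurable_times borel_measurable_sum borel_measurable_power borel_measurable_const) auto

lemma good_measN: "{w \<in> space (NN d). \<forall>S\<in>SS d. tm d w S \<le> c} \<in> sets (NN d)"
  by (rule sets.sets_Collect_finite_All[OF _ SS_fin]) (auto simp: SS_def intro!: borel_measurable_le tm_measN)

lemma center_meas: "center d \<in> measurable (std_gaussian d) (NN d)"
proof -
  have "(\<lambda>w i. (\<lambda>i w. if i < d then w i - (\<Sum>j<d. w j) / real d else undefined) i w)
        \<in> measurable (std_gaussian d) (NN d)"
  proof (rule measurable_PiM_single')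
    fix i assume "i \<in> {..<d}"
    thus "(\<lambda>w. if i < d then w i - (\<Sum>j<d. w j) / real d else undefined) \<in> measurable (std_gaussian d) lborel"
      unfolding std_gaussian_def using comp_meas
      by (simp add: measurable_lborel2 borel_measurable_diff borel_measurable_sum borel_measurable_divide)
  qed (auto simp: PiE_def extensional_def)
  thus ?thesis unfolding center_def by simp
qed

theorem lemma4p4:
  shows "\<exists>K::real. K > 0 \<and> (\<exists>d0::nat. \<forall>d\<ge>d0.
    measure (std_gaussian d) {w \<in> space (std_gaussian d). Tnorm d w \<le> K * sqrt (real d)}
      \<ge> 1 - exp (- 2 * real d / (ln (real d)) ^ 4) \<and>
    measure (centered_gaussian d) {w \<in> space (centered_gaussian d). Tnorm d w \<le> K * sqrt (real d)}
      \<ge> 1 - exp (- 2 * real d / (ln (real d)) ^ 4))"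
proof (intro exI conjI allI impI)
  show "(1600::real) > 0" by simp
  fix d :: nat assume dd: "d \<ge> 10^10"
  let ?M = "std_gaussian d"
  interpret prob_space ?M by (rule std_prob)
  have d2: "d \<ge> 2" and d1: "d \<ge> 1" using dd by auto
  have d5: "ln (real d) ^ 5 \<le> real d" using dd by (intro ln5_le) (simp add: of_nat_le_iff[symmetric])
  define Gd where "Gd = {w \<in> space ?M. \<forall>S\<in>SS d. tm d w S \<le> 1600 * real d}"
  have Gm: "Gd \<in> sets ?M" unfolding Gd_def by (rule good_meas)
  have "measure ?M (space ?M - Gd) \<le> exp (- 2 * real d / (ln (real d)) ^ 4)"
    unfolding Gd_def by (rule good_prob[OF d2 d5])
  hence Gp: "measure ?M Gd \<ge> 1 - exp (- 2 * real d / (ln (real d)) ^ 4)"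
    using prob_compl[OF Gm] by simp
  have c0: "(0::real) \<le> 1600 * sqrt (real d)" by simp
  have sq: "(1600 * sqrt (real d))\<^sup>2 = 1600\<^sup>2 * real d" by (simp add: power_mult_distrib)
  have T1: "{w \<in> space ?M. Tnorm d w \<le> 1600 * sqrt (real d)}
      = {w \<in> space ?M. \<forall>S\<in>SS d. tm d w S \<le> (1600 * sqrt (real d))\<^sup>2}"
    using T_le[OF d1 c0] by auto
  have "Gd \<subseteq> {w \<in> space ?M. Tnorm d w \<le> 1600 * sqrt (real d)}"
    unfolding T1 Gd_def sq by auto
  hence "measure ?M Gd \<le> measure ?M {w \<in> space ?M. Tnorm d w \<le> 1600 * sqrt (real d)}"
    using good_meas T1 by (intro finite_measure_mono) auto
  thus "measure ?M {w \<in> space ?M. Tnorm d w \<le> 1600 * sqrt (real d)} \<ge> 1 - exp (- 2 * real d / (ln (real d)) ^ 4)"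
    using Gp by linarith
  let ?T2 = "{w \<in> space (NN d). Tnorm d w \<le> 1600 * sqrt (real d)}"
  have T2: "?T2 = {w \<in> space (NN d). \<forall>S\<in>SS d. tm d w S \<le> (1600 * sqrt (real d))\<^sup>2}"
    using T_le[OF d1 c0] by auto
  have T2m: "?T2 \<in> sets (NN d)" unfolding T2 by (rule good_measN)
  have sp: "space (centered_gaussian d) = space (NN d)" unfolding centered_gaussian_def by simp
  have "measure (centered_gaussian d) ?T2 = measure ?M (center d -` ?T2 \<inter> space ?M)"
    unfolding centered_gaussian_def by (rule measure_distr[OF center_meas T2m])
  moreover have "Gd \<subseteq> center d -` ?T2 \<inter> space ?M"
  proof
    fix w assume w: "w \<in> Gd"
    have "center d w \<in> space (NN d)" by (auto simp: center_def space_PiM PiE_def extensional_def)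
    moreover have "\<forall>S\<in>SS d. tm d (center d w) S \<le> (1600 * sqrt (real d))\<^sup>2"
      using center_tm[OF d1] w unfolding Gd_def sq by auto
    ultimately show "w \<in> center d -` ?T2 \<inter> space ?M" using w T2 unfolding Gd_def by auto
  qed
  hence "measure ?M Gd \<le> measure ?M (center d -` ?T2 \<inter> space ?M)"
    using measurable_sets[OF center_meas T2m] by (intro finite_measure_mono) auto
  ultimately show "measure (centered_gaussian d) {w \<in> space (centered_gaussian d). Tnorm d w \<le> 1600 * sqrt (real d)}
      \<ge> 1 - exp (- 2 * real d / (ln (real d)) ^ 4)"
    using Gp unfolding sp by linarith
qed
end
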